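(* Let $n\geq 3$ and let $a_1(t),\dots,a_n(t)\in\mathbb{C}[t]$ be nonzero polynomials. For $b(t)\in\mathbb{C}[t]$, the equation $$\sum_{i=1}^n a_i(t)\,x_i(t)^2=b(t)$$ has a solution with all $x_i(t)\in\mathbb{C}[t]$ if and only if, for every integer $m\geq 1$, it has a solution modulo $\left(\prod_{i=1}^n a_i(t)\right)^m$ (i.e. a solution in $\mathbb{C}[t]/\left(\prod_{i=1}^n a_i(t)\right)^m$). *)

theory Defs
  imports "HOL-Computational_Algebra.Polynomial" Complex_Main
begin

definition has_poly_solution :: "nat \<Rightarrow> (nat \<Rightarrow> complex poly) \<Rightarrow> complex poly \<Rightarrow> bool" where
  "has_poly_solution n a b \<longleftrightarrow>
     (\<exists>x :: nat \<Rightarrow> complex poly. (\<Sum>i=1..n. a i * (x i)^2) = b)"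

definition has_solution_mod :: "nat \<Rightarrow> (nat \<Rightarrow> complex poly) \<Rightarrow> complex poly \<Rightarrow> complex poly \<Rightarrow> bool" where
  "has_solution_mod n a b q \<longleftrightarrow>
     (\<exists>x :: nat \<Rightarrow> complex poly. q dvd ((\<Sum>i=1..n. a i * (x i)^2) - b))"

end

theory Submission
  imports Defs "HOL-Computational_Algebra.Computational_Algebra" "HOL-Computational_Algebra.Field_as_Ring"
begin


lemma coprime_no_common_root:
  fixes p q :: "complex poly"
  assumes "\<And>z. poly p z = 0 \<Longrightarrow> poly q z \<noteq> 0"
  shows "coprime p q"
proof (rule coprimeI)
  fix c assume c: "c dvd p" "c dvd q"
  show "is_unit c"
  proof (rule ccontr)
    assume nu: "\<not> is_unit c"
    show False
    proof (cases "c = 0")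
      case True
      then have "p = 0" "q = 0" using c by auto
      then show False using assms[of 0] by simp
    next
      case False
      then have "degree c \<noteq> 0" using nu is_unit_iff_degree by blast
      then have "\<not> constant (poly c)" by (simp add: constant_degree)
      then obtain z where "poly c z = 0" using fundamental_theorem_of_algebra by blast
      then have "poly p z = 0" "poly q z = 0" using c by (auto elim!: dvdE)
      then show False using assms by blast
    qed
  qed
qed

lemma coprime_common_root:
  fixes p q :: "complex poly"
  assumes "coprime p q" "poly p z = 0" "poly q z = 0"
  shows False
proof -
  have "[:-z,1:] dvd p" "[:-z,1:] dvd q" using assms poly_eq_0_iff_dvd by auto
  then have "is_unit [:-z,1:]" using assms(1) coprime_common_divisor by blast
  then show False by (simp add: is_unit_iff_degree)
qed

lemma coprime_lin_pow:
  fixes a b :: complex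
  assumes "a \<noteq> b"
  shows "coprime ([:-a,1:]^m) ([:-b,1:]^k)"
  by (rule coprime_no_common_root) (use assms in \<open>auto simp: poly_power\<close>)

lemma prod_lin_dvd:
  fixes F :: "complex poly"
  assumes "finite S" "\<And>a. a \<in> S \<Longrightarrow> [:-a,1:]^(e a) dvd F"
  shows "(\<Prod>a\<in>S. [:-a,1:]^(e a)) dvd F"
  using assms
proof (induction S rule: finite_induct)
  case empty then show ?case by simp
next
  case (insert x S)
  have "coprime ([:-x,1:]^(e x)) (\<Prod>a\<in>S. [:-a,1:]^(e a))"
    by (rule prod_coprime_right) (use insert in \<open>auto simp del: coprime_power_left_iff coprime_power_right_iff intro!: coprime_lin_pow\<close>)
  then show ?case using insert by (simp add: divides_mult)
qed

lemma crt_lin: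
  fixes f :: "complex \<Rightarrow> complex poly"
  assumes "finite S"
  shows "\<exists>y. \<forall>a\<in>S. [:-a,1:]^N dvd (y - f a)"
  using assms
proof (induction S rule: finite_induct)
  case empty then show ?case by simp
next
  case (insert x S)
  then obtain y' where y': "\<forall>a\<in>S. [:-a,1:]^N dvd (y' - f a)" by blast
  define Pi where "Pi = (\<Prod>a\<in>S. [:-a,1:]^N)"
  have cop: "coprime ([:-x,1:]^N) Pi"
    unfolding Pi_def by (rule prod_coprime_right) (use insert in \<open>auto simp del: coprime_power_left_iff coprime_power_right_iff intro!: coprime_lin_pow\<close>)
  obtain u w where uw: "u * [:-x,1:]^N + w * Pi = 1"
    using bezout_coefficients_fst_snd[of "[:-x,1:]^N" Pi] cop
    by (metis coprime_imp_gcd_eq_1)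
  define s where "s = [:-x,1:]^N"
  have wP: "w * Pi = 1 - u * s" using uw unfolding s_def by (simp add: algebra_simps)
  define y where "y = f x * (w * Pi) + y' * (u * s)"
  have "y - f x = (y' - f x) * (u * s)"
    unfolding y_def wP by (simp add: algebra_simps)
  then have 1: "[:-x,1:]^N dvd (y - f x)" unfolding s_def by simp
  have us: "u * s = 1 - w * Pi" using wP by simp
  have "y - y' = (f x - y') * (w * Pi)"
    unfolding y_def us by (simp add: algebra_simps)
  then have "Pi dvd (y - y')" by simp
  have 2: "\<forall>a\<in>S. [:-a,1:]^N dvd (y - f a)"
  proof
    fix a assume a: "a \<in> S"
    have "[:-a,1:]^N dvd Pi" unfolding Pi_def using insert a by (auto intro: dvd_prodI)
    then have "[:-a,1:]^N dvd (y - y')" using \<open>Pi dvd (y - y')\<close> by (rule dvd_trans)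
    moreover have "[:-a,1:]^N dvd (y' - f a)" using y' a by blast
    ultimately have "[:-a,1:]^N dvd ((y - y') + (y' - f a))" by (rule dvd_add)
    then show "[:-a,1:]^N dvd (y - f a)" by simp
  qed
  show ?case using 1 2 by blast
qed



lemma dvd_by_order:
  fixes p q :: "complex poly"
  assumes "p \<noteq> 0" "\<And>z. q \<noteq> 0 \<Longrightarrow> order z p \<le> order z q"
  shows "p dvd q"
proof (cases "q = 0")
  case True then show ?thesis by simp
next
  case False
  have fin: "finite {z. poly p z = 0}" using assms(1) poly_roots_finite by blast
  have "(\<Prod>z|poly p z = 0. [:-z,1:]^(order z p)) dvd q"
    by (rule prod_lin_dvd[OF fin]) (use assms False in \<open>auto simp: order_divides\<close>)
  then have "smult (lead_coeff p) (\<Prod>z|poly p z = 0. [:-z,1:]^(order z p)) dvd q"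
    using assms(1) by (simp add: smult_dvd_iff)
  then show ?thesis by (subst (asm) complex_poly_decompose)
qed

lemma sqrt_mod_rsquarefree:
  fixes l f :: "complex poly"
  assumes "rsquarefree l"
  shows "\<exists>X. l dvd X^2 - f"
proof -
  have l0: "l \<noteq> 0" using assms rsquarefree_def by blast
  have fin: "finite {z. poly l z = 0}" using l0 poly_roots_finite by blast
  obtain X where X: "\<forall>z\<in>{z. poly l z = 0}. [:-z,1:]^1 dvd (X - [:csqrt (poly f z):])"
    using crt_lin[OF fin, of 1 "\<lambda>z. [:csqrt (poly f z):]"] by (elim exE)
  have key: "[:-z,1:]^1 dvd (X^2 - f)" if z: "z \<in> {z. poly l z = 0}" for z
  proof -
    have "[:-z,1:] dvd (X - [:csqrt (poly f z):])" using bspec[OF X z] by (simp only: power_one_right)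
    then have "poly (X - [:csqrt (poly f z):]) z = 0" by (simp only: poly_eq_0_iff_dvd)
    then have "poly X z = csqrt (poly f z)" by simp
    then have "poly (X^2 - f) z = 0" by (simp add: power2_csqrt)
    then show "[:-z,1:]^1 dvd (X^2 - f)" by (simp only: power_one_right poly_eq_0_iff_dvd[symmetric])
  qed
  have "(\<Prod>z|poly l z = 0. [:-z,1:]^1) dvd (X^2 - f)"
    by (rule prod_lin_dvd[OF fin key]) 
  then have "(\<Prod>z|poly l z = 0. [:-z,1:]) dvd (X^2 - f)" by (simp only: power_one_right)
  then have "smult (lead_coeff l) (\<Prod>z|poly l z = 0. [:-z,1:]) dvd (X^2 - f)"
    by (rule smult_dvd) (use l0 in simp)
  then have "l dvd X^2 - f" by (subst (asm) complex_poly_decompose_rsquarefree[OF assms])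
  then show ?thesis by blast
qed

lemma squarefree_in_progression:
  fixes A m :: "complex poly"
  assumes cop: "coprime A m" and m0: "m \<noteq> 0"
  shows "\<exists>c. rsquarefree (A + smult c m)"
proof -
  define W where "W = pderiv A * m - A * pderiv m"
  show ?thesis
  proof (cases "W = 0")
    case True
    then have "A * pderiv m = pderiv A * m" unfolding W_def by simp
    then have "m dvd pderiv m * A" by (metis dvd_triv_right mult.commute)
    then have "m dvd pderiv m" using cop by (simp add: coprime_commute coprime_dvd_mult_left_iff)
    then have dm: "degree m = 0" by simp
    then have "pderiv m = 0" by (simp add: pderiv_eq_0_iff)
    then have "pderiv A * m = 0" using True unfolding W_def by simp
    then have "pderiv A = 0" using m0 by simp
    then have dA: "degree A = 0" by (simp add: pderiv_eq_0_iff)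
    obtain a where a: "A = [:a:]" using dA degree_eq_zeroE by blast
    obtain b where b: "m = [:b:]" using dm degree_eq_zeroE by blast
    have b0: "b \<noteq> 0" using m0 b by simp
    define c where "c = (1 - a) / b"
    have "A + smult c m = 1" using b0 unfolding a b c_def by (simp add: one_pCons)
    then have "rsquarefree (A + smult c m)" by (simp add: rsquarefree_roots)
    then show ?thesis by blast
  next
    case False
    define Bad where "Bad = (\<lambda>z. - poly A z / poly m z) ` {z. poly W z = 0}"
    have "finite Bad" unfolding Bad_def by (intro finite_imageI poly_roots_finite False)
    then obtain c where c: "c \<notin> Bad"
      using ex_new_if_finite[OF infinite_UNIV_char_0] by blast
    have "rsquarefree (A + smult c m)"
      unfolding rsquarefree_roots
    proof (intro allI notI)
      fix z assume h: "poly (A + smult c m) z = 0 \<and> poly (pderiv (A + smult c m)) z = 0"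
      then have h1: "poly A z + c * poly m z = 0" and h2: "poly (pderiv A) z + c * poly (pderiv m) z = 0"
        by (auto simp: pderiv_add pderiv_smult)
      have mz: "poly m z \<noteq> 0"
      proof
        assume "poly m z = 0"
        then have "poly A z = 0" using h1 by simp
        then show False using coprime_common_root[OF cop] \<open>poly m z = 0\<close> by blast
      qed
      have hA: "poly A z = - (c * poly m z)" using h1 by (simp add: eq_neg_iff_add_eq_0)
      have cz: "c = - poly A z / poly m z" using mz unfolding hA by simp
      have "poly W z = poly (pderiv A) z * poly m z - poly A z * poly (pderiv m) z"
        unfolding W_def by simp
      also have "\<dots> = 0"
      proof -
        have "poly (pderiv A) z = - (c * poly (pderiv m) z)" using h2 by (simp add: eq_neg_iff_add_eq_0)
        then show ?thesis using hA by (simp add: algebra_simps)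
      qed
      finally have "c \<in> Bad" unfolding Bad_def using cz by blast
      then show False using c by blast
    qed
    then show ?thesis by blast
  qed
qed



definition isol :: "complex poly \<Rightarrow> complex poly \<Rightarrow> bool" where
  "isol D f \<longleftrightarrow> (\<exists>X Y Z. (X \<noteq> 0 \<or> Y \<noteq> 0 \<or> Z \<noteq> 0) \<and> X^2 = D * Y^2 + f * Z^2)"

lemma isol_swap: "isol D f \<Longrightarrow> isol f D"
  unfolding isol_def by (metis add.commute)

lemma iso_step:
  fixes D f :: "complex poly"
  assumes IH: "\<And>D' f'. degree D' + degree f' < degree D + degree f \<Longrightarrow> D' \<noteq> 0 \<Longrightarrow> f' \<noteq> 0 \<Longrightarrow> isol D' f'"
    and D0: "D \<noteq> 0" and f0: "f \<noteq> 0" and deg: "degree f \<le> degree D"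
  shows "isol D f"
proof (cases "degree D = 0")
  case True
  then obtain d where d: "D = [:d:]" using degree_eq_zeroE by blast
  have "[:csqrt d:]^2 = D * 1^2 + f * 0^2" unfolding d
    by (simp add: power2_eq_square power2_csqrt[unfolded power2_eq_square])
  then show ?thesis unfolding isol_def by (metis one_neq_zero)
next
  case degD: False
  show ?thesis
  proof (cases "rsquarefree D")
    case False
    then obtain a where "order a D \<noteq> 0" "order a D \<noteq> 1" using D0 unfolding rsquarefree_def by blast
    then have "2 \<le> order a D" by simp
    then have "[:-a,1:]^2 dvd D" using order_divides by blast
    then obtain D1 where D1: "D = [:-a,1:]^2 * D1" by (elim dvdE)
    have D10: "D1 \<noteq> 0" using D0 D1 by auto
    have "degree D = 2 + degree D1" unfolding D1 using D10
      by (simp add: degree_mult_eq degree_power_eq)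
    then have "degree D1 + degree f < degree D + degree f" by simp
    then have "isol D1 f" using IH D10 f0 by blast
    then obtain X Y Z where nz: "X \<noteq> 0 \<or> Y \<noteq> 0 \<or> Z \<noteq> 0" and e: "X^2 = D1 * Y^2 + f * Z^2"
      unfolding isol_def by blast
    define s where "s = [:-a,1::complex:]"
    have s0: "s \<noteq> 0" unfolding s_def by simp
    have "(s*X)^2 = D * Y^2 + f * (s*Z)^2"
      unfolding D1 s_def[symmetric] by (simp add: power_mult_distrib e algebra_simps)
    moreover have "s*X \<noteq> 0 \<or> Y \<noteq> 0 \<or> s*Z \<noteq> 0" using nz s0 by auto
    ultimately show ?thesis unfolding isol_def by blast
  next
    case sqf: True
    obtain X0 where X0: "D dvd X0^2 - f" using sqrt_mod_rsquarefree[OF sqf] by blast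
    define X1 where "X1 = X0 mod D"
    define qq where "qq = X0 div D"
    have X0e: "X0 = X1 + D * qq" unfolding X1_def qq_def by simp
    have eqn: "X0^2 - f = (X1^2 - f) + D * (qq * (2 * X1 + D * qq))"
      by (subst X0e) (simp add: power2_eq_square algebra_simps)
    have "D dvd (X1^2 - f) + D * (qq * (2 * X1 + D * qq))" using X0 by (simp only: eqn)
    then have dv: "D dvd X1^2 - f" by (simp only: dvd_add_left_iff dvd_triv_left)
    have degX1: "X1 = 0 \<or> degree X1 < degree D" unfolding X1_def
      using degree_mod_less[OF D0] by blast
    show ?thesis
    proof (cases "X1^2 - f = 0")
      case True
      then have "X1^2 = D * 0^2 + f * 1^2" by simp
      then show ?thesis unfolding isol_def by (metis one_neq_zero)
    next
      case E0: False
      obtain D' where D': "X1^2 - f = D * D'" using dv by (elim dvdE)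
      have D'0: "D' \<noteq> 0" using E0 D' by auto
      have "degree (X1^2 - f) \<le> max (degree (X1^2)) (degree f)" by (rule degree_diff_le_max)
      moreover have "degree (X1^2) \<le> 2 * degree X1" using degree_power_le[of X1 2] by (simp add: mult.commute)
      moreover have "degree (X1^2 - f) = degree D + degree D'" unfolding D' using D0 D'0 by (simp add: degree_mult_eq)
      ultimately have "degree D' < degree D" using degX1 deg degD by auto
      then have "isol D' f" using IH D'0 f0 by simp
      then obtain X Y Z where nz: "X \<noteq> 0 \<or> Y \<noteq> 0 \<or> Z \<noteq> 0" and e: "X^2 = D' * Y^2 + f * Z^2"
        unfolding isol_def by blast
      define X' where "X' = X * X1 + f * Z"
      define Y' where "Y' = D' * Y"
      define Z' where "Z' = X + X1 * Z"
      have "X'^2 - f * Z'^2 = (X^2 - f * Z^2) * (X1^2 - f)"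
        unfolding X'_def Z'_def by (simp add: power2_eq_square algebra_simps)
      also have "\<dots> = D * Y'^2" unfolding D' Y'_def using e by (simp add: power2_eq_square algebra_simps)
      finally have eq: "X'^2 = D * Y'^2 + f * Z'^2" by (simp add: algebra_simps)
      have "X' \<noteq> 0 \<or> Y' \<noteq> 0 \<or> Z' \<noteq> 0"
      proof (rule ccontr)
        assume "\<not> ?thesis"
        then have "Y' = 0" "Z' = 0" by auto
        then have Y: "Y = 0" using D'0 unfolding Y'_def by simp
        have X: "X = - (X1 * Z)" using \<open>Z' = 0\<close> unfolding Z'_def by (simp add: eq_neg_iff_add_eq_0)
        have "Z^2 * (X1^2 - f) = 0" using e unfolding Y X by (simp add: power2_eq_square algebra_simps)
        then have "Z = 0" using E0 by simp
        then show False using nz X Y by simp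
      qed
      then show ?thesis using eq unfolding isol_def by blast
    qed
  qed
qed

lemma iso_exists:
  fixes D f :: "complex poly"
  assumes "D \<noteq> 0" "f \<noteq> 0"
  shows "isol D f"
proof -
  have "\<forall>D f. degree D + degree f = k \<longrightarrow> D \<noteq> 0 \<longrightarrow> f \<noteq> 0 \<longrightarrow> isol (D::complex poly) f" for k
  proof (induction k rule: less_induct)
    case (less k)
    show ?case
    proof (intro allI impI)
      fix D f :: "complex poly" assume k: "degree D + degree f = k" and D0: "D \<noteq> 0" and f0: "f \<noteq> 0"
      have IH: "\<And>D' f'. degree D' + degree f' < degree D + degree f \<Longrightarrow> D' \<noteq> 0 \<Longrightarrow> f' \<noteq> 0 \<Longrightarrow> isol D' f'"
        using less k by blast
      show "isol D f"
      proof (cases "degree f \<le> degree D")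
        case True then show ?thesis using iso_step[OF IH D0 f0] by blast
      next
        case False
        have IH': "\<And>D' f'. degree D' + degree f' < degree f + degree D \<Longrightarrow> D' \<noteq> 0 \<Longrightarrow> f' \<noteq> 0 \<Longrightarrow> isol D' f'"
          using IH by (simp add: add.commute)
        have "isol f D" using iso_step[OF IH' f0 D0] False by simp
        then show ?thesis by (rule isol_swap)
      qed
    qed
  qed
  then show ?thesis using assms by blast
qed



definition Bf :: "nat \<Rightarrow> (nat \<Rightarrow> complex poly) \<Rightarrow> (nat \<Rightarrow> complex poly) \<Rightarrow> (nat \<Rightarrow> complex poly) \<Rightarrow> complex poly" where
  "Bf n a x y = (\<Sum>i=1..n. a i * x i * y i)"

lemma Bf_comm: "Bf n a x y = Bf n a y x"
  unfolding Bf_def by (simp add: mult.commute mult.left_commute)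

lemma Bf_lin2: "Bf n a (\<lambda>i. p * x i + r * y i) w = p * Bf n a x w + r * Bf n a y w"
  unfolding Bf_def by (simp add: sum.distrib sum_distrib_left algebra_simps)

lemma Bf_lin3: "Bf n a (\<lambda>i. x i + p * y i + r * z i) w = Bf n a x w + p * Bf n a y w + r * Bf n a z w"
  unfolding Bf_def by (simp add: sum.distrib sum_distrib_left algebra_simps)

lemma Bf_lin1: "Bf n a (\<lambda>i. x i + p * y i) w = Bf n a x w + p * Bf n a y w"
  unfolding Bf_def by (simp add: sum.distrib sum_distrib_left algebra_simps)

lemma Bf_q2: "Bf n a (\<lambda>i. p * x i + r * y i) (\<lambda>i. p * x i + r * y i) =
   p^2 * Bf n a x x + 2 * p * r * Bf n a x y + r^2 * Bf n a y y"
proof -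
  have e: "a i * (p * x i + r * y i) * (p * x i + r * y i) =
     p^2 * (a i * x i * x i) + (2 * p * r) * (a i * x i * y i) + r^2 * (a i * y i * y i)" for i
    by (simp add: power2_eq_square algebra_simps)
  show ?thesis unfolding Bf_def e by (simp only: sum.distrib sum_distrib_left)
qed

lemma Bf_q1: "Bf n a (\<lambda>i. x i + p * y i) (\<lambda>i. x i + p * y i) =
   Bf n a x x + 2 * p * Bf n a x y + p^2 * Bf n a y y"
  using Bf_q2[of n a 1 x p y] by simp

lemma Bf_q3: "Bf n a (\<lambda>i. x i + p * y i + r * z i) (\<lambda>i. x i + p * y i + r * z i) =
   Bf n a x x + p^2 * Bf n a y y + r^2 * Bf n a z z + 2 * p * Bf n a x y + 2 * r * Bf n a x z
   + 2 * p * r * Bf n a y z"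
proof -
  have e: "a i * (x i + p * y i + r * z i) * (x i + p * y i + r * z i) =
     (a i * x i * x i) + p^2 * (a i * y i * y i) + r^2 * (a i * z i * z i) + (2 * p) * (a i * x i * y i)
     + (2 * r) * (a i * x i * z i) + (2 * p * r) * (a i * y i * z i)" for i
    by (simp add: power2_eq_square algebra_simps)
  show ?thesis unfolding Bf_def e by (simp only: sum.distrib sum_distrib_left)
qed

lemma Bf_cong_left:
  assumes "\<And>i. m dvd x i - x' i"
  shows "m dvd Bf n a x y - Bf n a x' y"
proof -
  have "Bf n a x y - Bf n a x' y = (\<Sum>i=1..n. a i * (x i - x' i) * y i)"
    unfolding Bf_def by (simp add: sum_subtractf[symmetric] algebra_simps)
  also have "m dvd \<dots>" by (rule dvd_sum) (use assms in auto)
  finally show ?thesis .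
qed

lemma Bf_cong_q:
  assumes "\<And>i. m dvd x i - x' i"
  shows "m dvd Bf n a x x - Bf n a x' x'"
proof -
  have 1: "m dvd Bf n a x x - Bf n a x' x" by (rule Bf_cong_left[OF assms])
  have "m dvd Bf n a x x' - Bf n a x' x'" by (rule Bf_cong_left[OF assms])
  then have 2: "m dvd Bf n a x' x - Bf n a x' x'" by (simp add: Bf_comm[of n a x' x])
  have "Bf n a x x - Bf n a x' x' = (Bf n a x x - Bf n a x' x) + (Bf n a x' x - Bf n a x' x')" by simp
  then show ?thesis using 1 2 by (metis dvd_add)
qed

definition half :: "complex poly" where "half = [:1/2:]"

lemma two_half: "2 * half = 1"
  unfolding half_def by (simp add: numeral_poly one_pCons)



lemma local_fix:
  fixes n :: nat and a v u z0 x0 :: "nat \<Rightarrow> complex poly" and \<rho> c b :: "complex poly"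
  assumes qu: "Bf n a u u = 0" and uz: "Bf n a u z0 = 0" and qz: "Bf n a z0 z0 = \<rho>"
    and zv: "Bf n a z0 v = 0" and uv: "Bf n a u v = c" and c0: "c \<noteq> 0" and r0: "\<rho> \<noteq> 0"
    and N: "N > 2 + 2 * degree c + degree \<rho>"
    and x0: "[:-\<alpha>,1:]^N dvd Bf n a x0 x0 - b"
  shows "\<exists>x. [:-\<alpha>,1:]^N dvd Bf n a x x - b \<and> \<not> [:-\<alpha>,1:]^N dvd Bf n a x v"
proof -
  define s where "s = [:-\<alpha>,1::complex:]"
  define U where "U = Bf n a x0 u"
  define Z where "Z = Bf n a x0 z0"
  define h where "h = Bf n a x0 v"
  define E where "E = (\<lambda>lam i. x0 i + (lam * U) * z0 i + (-(lam*Z) - lam^2*\<rho>*half*U) * u i)"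
  have qE: "Bf n a (E lam) (E lam) = Bf n a x0 x0" for lam
  proof -
    have zu: "Bf n a z0 u = 0" using uz by (simp add: Bf_comm)
    have "Bf n a (E lam) (E lam) = Bf n a x0 x0 + ((lam*U)^2 * \<rho> + 2 * (lam*U) * Z
          + 2 * (-(lam*Z) - lam^2*\<rho>*half*U) * U)"
      unfolding E_def Bf_q3 qu qz zu U_def[symmetric] Z_def[symmetric] by simp
    also have "(lam*U)^2 * \<rho> + 2 * (lam*U) * Z + 2 * (-(lam*Z) - lam^2*\<rho>*half*U) * U
        = (1 - 2 * half) * ((lam*U)^2 * \<rho>)"
      by (simp add: power2_eq_square algebra_simps)
    finally show ?thesis by (simp add: two_half)
  qed
  have hE: "Bf n a (E lam) v = h - lam * c * Z - lam^2 * \<rho> * half * U * c" for lam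
    unfolding E_def Bf_lin3 zv uv h_def[symmetric] by (simp add: algebra_simps)
  show ?thesis
  proof (cases "s^N dvd h")
    case False then show ?thesis using x0 unfolding s_def h_def by blast
  next
    case hdeep: True
    show ?thesis
    proof (cases "s^N dvd Bf n a (E s) v")
      case False then show ?thesis using x0 qE unfolding s_def by metis
    next
      case d1: True
      show ?thesis
      proof (cases "s^N dvd Bf n a (E (2*s)) v")
        case False then show ?thesis using x0 qE unfolding s_def by metis
      next
        case d2: True
        define \<mu> where "\<mu> = s^2 * c * \<rho>"
        have "2 * Bf n a (E s) v - Bf n a (E (2*s)) v - h = 2 * half * (\<mu> * U)"
          unfolding hE \<mu>_def by (simp add: power2_eq_square algebra_simps)
        also have "\<dots> = \<mu> * U" by (simp add: two_half)
        finally have eqmu: "\<mu> * U = 2 * Bf n a (E s) v - Bf n a (E (2*s)) v - h" by simp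
        have dmu: "s^N dvd \<mu> * U" unfolding eqmu using d1 d2 hdeep by (intro dvd_diff dvd_mult) auto
        define x where "x = (\<lambda>i. x0 i + \<mu> * u i)"
        have qx: "Bf n a x x = Bf n a x0 x0 + 2 * (\<mu> * U)"
          unfolding x_def Bf_q1 qu U_def by (simp add: algebra_simps)
        have Bx: "Bf n a x v = h + s^2 * c^2 * \<rho>"
          unfolding x_def Bf_lin1 uv h_def \<mu>_def by (simp add: power2_eq_square algebra_simps)
        have 1: "s^N dvd Bf n a x x - b"
        proof -
          have "Bf n a x x - b = (Bf n a x0 x0 - b) + 2 * (\<mu> * U)" unfolding qx by simp
          then show ?thesis using x0 dmu unfolding s_def by (metis dvd_add dvd_mult)
        qed
        have 2: "\<not> s^N dvd Bf n a x v"
        proof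
          assume "s^N dvd Bf n a x v"
          then have "s^N dvd s^2 * c^2 * \<rho>" unfolding Bx using hdeep
            by (metis add_diff_cancel_left' dvd_diff)
          moreover have nz: "s^2 * c^2 * \<rho> \<noteq> 0" using c0 r0 unfolding s_def by simp
          ultimately have "degree (s^N) \<le> degree (s^2 * c^2 * \<rho>)" by (rule dvd_imp_degree_le)
          moreover have "degree (s^N) = N" unfolding s_def by (simp add: degree_linear_power)
          moreover have "degree (s^2 * c^2 * \<rho>) = 2 + 2 * degree c + degree \<rho>"
            using c0 r0 unfolding s_def by (simp add: degree_mult_eq degree_power_eq degree_linear_power)
          ultimately show False using N by simp
        qed
        show ?thesis using 1 2 unfolding s_def by blast
      qed
    qed
  qed
qed



lemma sumsq_Bf: "(\<Sum>i=1..n. a i * (x i)^2) = Bf n a x x"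
  unfolding Bf_def by (simp add: power2_eq_square mult.assoc)

lemma Bf_supp3:
  assumes "3 \<le> n" "\<And>i. i \<notin> {1,2,3} \<Longrightarrow> v i = 0"
  shows "Bf n a x v = a 1 * x 1 * v 1 + a 2 * x 2 * v 2 + a 3 * x 3 * v 3"
proof -
  have "Bf n a x v = (\<Sum>i\<in>{1,2,3}. a i * x i * v i)"
    unfolding Bf_def
    by (rule sum.mono_neutral_right) (use assms in auto)
  then show ?thesis by simp
qed

lemma coprime_progression:
  fixes A m :: "complex poly"
  assumes "coprime A m"
  shows "coprime (A + smult c m) m"
proof (rule coprimeI)
  fix d assume d: "d dvd A + smult c m" "d dvd m"
  have "d dvd smult c m" using d(2) by (simp add: dvd_smult)
  then have "d dvd A" using d(1) by (metis add_diff_cancel_right' dvd_diff)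
  then show "is_unit d" using assms d(2) coprime_common_divisor by blast
qed

lemma iso_vector:
  fixes a1 a2 a3 :: "complex poly"
  assumes "a1 \<noteq> 0" "a2 \<noteq> 0" "a3 \<noteq> 0"
  shows "\<exists>v1 v2 v3 k1 k2 k3. (v1 \<noteq> 0 \<or> v2 \<noteq> 0 \<or> v3 \<noteq> 0) \<and>
           a1 * v1^2 + a2 * v2^2 + a3 * v3^2 = 0 \<and> k1 * v1 + k2 * v2 + k3 * v3 = 1"
proof -
  have "isol (-(a1*a2)) (-(a1*a3))" using assms by (intro iso_exists) auto
  then obtain X Y Z where nz: "X \<noteq> 0 \<or> Y \<noteq> 0 \<or> Z \<noteq> 0"
      and e: "X^2 = (-(a1*a2)) * Y^2 + (-(a1*a3)) * Z^2"
    unfolding isol_def by blast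
  define V1 where "V1 = X"
  define V2 where "V2 = a1 * Y"
  define V3 where "V3 = a1 * Z"
  have isoV: "a1 * V1^2 + a2 * V2^2 + a3 * V3^2 = 0"
  proof -
    have "a1 * V1^2 + a2 * V2^2 + a3 * V3^2 = a1 * (X^2 - ((-(a1*a2)) * Y^2 + (-(a1*a3)) * Z^2))"
      unfolding V1_def V2_def V3_def by (simp add: power2_eq_square algebra_simps)
    then show ?thesis using e by simp
  qed
  have nzV: "V1 \<noteq> 0 \<or> V2 \<noteq> 0 \<or> V3 \<noteq> 0" using nz assms unfolding V1_def V2_def V3_def by auto
  define d where "d = gcd V1 (gcd V2 V3)"
  have d0: "d \<noteq> 0" using nzV unfolding d_def by auto
  obtain e1 e' where ee: "e1 * V1 + e' * gcd V2 V3 = d"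
    unfolding d_def using bezout_coefficients_fst_snd by blast
  obtain e2 e3 where ee2: "e2 * V2 + e3 * V3 = gcd V2 V3"
    using bezout_coefficients_fst_snd by blast
  have "d dvd V1" "d dvd V2" "d dvd V3" unfolding d_def by (auto intro: dvd_trans)
  then obtain v1 v2 v3 where v: "V1 = d * v1" "V2 = d * v2" "V3 = d * v3" by (meson dvdE)
  have "d * (e1 * v1 + (e' * e2) * v2 + (e' * e3) * v3) = d * 1"
  proof -
    have "e1 * V1 + e' * (e2 * V2 + e3 * V3) = d" using ee ee2 by simp
    then show ?thesis unfolding v by (simp add: algebra_simps)
  qed
  then have k: "e1 * v1 + (e' * e2) * v2 + (e' * e3) * v3 = 1" using d0 by (metis mult_left_cancel)
  have "d^2 * (a1 * v1^2 + a2 * v2^2 + a3 * v3^2) = 0"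
    using isoV unfolding v by (simp add: power2_eq_square algebra_simps)
  then have iso: "a1 * v1^2 + a2 * v2^2 + a3 * v3^2 = 0" using d0 by simp
  have "v1 \<noteq> 0 \<or> v2 \<noteq> 0 \<or> v3 \<noteq> 0" using nzV unfolding v by auto
  then show ?thesis using iso k by blast
qed

lemma z0_identity:
  fixes a1 a2 a3 v1 v2 v3 k1 k2 k3 :: "complex poly"
  shows "a1 * (a2*v2*k3 - a3*v3*k2) * (a2*v2*k3 - a3*v3*k2) + a2 * (a3*v3*k1 - a1*v1*k3) * (a3*v3*k1 - a1*v1*k3)
     + a3 * (a1*v1*k2 - a2*v2*k1) * (a1*v1*k2 - a2*v2*k1)
   = (a2*a3*k1^2 + a1*a3*k2^2 + a1*a2*k3^2) * (a1*v1^2 + a2*v2^2 + a3*v3^2) - a1*a2*a3*(k1*v1+k2*v2+k3*v3)^2"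
  by (simp add: power2_eq_square algebra_simps)

lemma poly_dvd_root: "p dvd q \<Longrightarrow> poly p z = 0 \<Longrightarrow> poly q (z::complex) = 0"
  by (auto elim!: dvdE)

theorem mainTheorem7:
  fixes n :: nat and a :: "nat \<Rightarrow> complex poly" and b :: "complex poly"
  assumes "n \<ge> 3"
    and "\<And>i. i \<in> {1..n} \<Longrightarrow> a i \<noteq> 0"
  shows "has_poly_solution n a b \<longleftrightarrow>
         (\<forall>m::nat. m \<ge> 1 \<longrightarrow> has_solution_mod n a b ((\<Prod>i=1..n. a i) ^ m))"
proof
  assume "has_poly_solution n a b"
  then show "\<forall>m::nat. m \<ge> 1 \<longrightarrow> has_solution_mod n a b ((\<Prod>i=1..n. a i) ^ m)"
    unfolding has_poly_solution_def has_solution_mod_def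
  proof (elim exE, intro allI impI)
    fix x :: "nat \<Rightarrow> complex poly" and m :: nat
    assume "(\<Sum>i=1..n. a i * (x i)^2) = b"
    then have "(\<Prod>i=1..n. a i) ^ m dvd (\<Sum>i=1..n. a i * (x i)^2) - b" by simp
    then show "\<exists>x. (\<Prod>i=1..n. a i) ^ m dvd (\<Sum>i=1..n. a i * (x i)^2) - b" by blast
  qed
next
  assume loc: "\<forall>m::nat. m \<ge> 1 \<longrightarrow> has_solution_mod n a b ((\<Prod>i=1..n. a i) ^ m)"
  note n3 = assms(1)
  define P where "P = (\<Prod>i=1..n. a i)"
  have P0: "P \<noteq> 0" unfolding P_def using assms(2) by auto
  have aP: "a i dvd P" if "i \<in> {1..n}" for i unfolding P_def using that by (intro dvd_prodI) auto
  have a1: "a 1 \<noteq> 0" and a2: "a 2 \<noteq> 0" and a3: "a 3 \<noteq> 0" using assms(2) n3 by auto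
  have rootP: "poly P z = 0" if "poly (a i) z = 0" "i \<in> {1,2,3}" for i z
  proof -
    have "a i dvd P" using aP that n3 by auto
    then show ?thesis using that by (auto elim!: dvdE)
  qed
  obtain v1 v2 v3 k1 k2 k3 where vnz: "v1 \<noteq> 0 \<or> v2 \<noteq> 0 \<or> v3 \<noteq> 0"
    and iso: "a 1 * v1^2 + a 2 * v2^2 + a 3 * v3^2 = 0" and kv: "k1 * v1 + k2 * v2 + k3 * v3 = 1"
    using iso_vector[OF a1 a2 a3] by blast
  define vv where "vv = (\<lambda>i::nat. if i = 1 then v1 else if i = 2 then v2 else if i = 3 then v3 else 0)"
  have vv_supp: "\<And>i. i \<notin> {1,2,3} \<Longrightarrow> vv i = 0" unfolding vv_def by auto
  have Bvv: "Bf n a x vv = a 1 * x 1 * v1 + a 2 * x 2 * v2 + a 3 * x 3 * v3" for x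
    using Bf_supp3[OF n3 vv_supp] by (simp add: vv_def)
  have qv: "Bf n a vv vv = 0" using iso unfolding Bvv by (simp add: vv_def power2_eq_square algebra_simps)
  define \<rho> where "\<rho> = - (a 1 * a 2 * a 3)"
  have r0: "\<rho> \<noteq> 0" unfolding \<rho>_def using a1 a2 a3 by simp
  define z0 where "z0 = (\<lambda>i::nat. if i = 1 then a 2*v2*k3 - a 3*v3*k2 else if i = 2 then a 3*v3*k1 - a 1*v1*k3
       else if i = 3 then a 1*v1*k2 - a 2*v2*k1 else 0)"
  have z0_supp: "\<And>i. i \<notin> {1,2,3} \<Longrightarrow> z0 i = 0" unfolding z0_def by auto
  have zv: "Bf n a z0 vv = 0" unfolding Bvv by (simp add: z0_def algebra_simps)
  have vz: "Bf n a vv z0 = 0" using zv by (simp add: Bf_comm)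
  have qz: "Bf n a z0 z0 = \<rho>"
  proof -
    have "Bf n a z0 z0 = a 1 * z0 1 * z0 1 + a 2 * z0 2 * z0 2 + a 3 * z0 3 * z0 3"
      using Bf_supp3[OF n3 z0_supp] .
    also have "\<dots> = (a 2*a 3*k1^2 + a 1*a 3*k2^2 + a 1*a 2*k3^2) * (a 1*v1^2 + a 2*v2^2 + a 3*v3^2)
                    - a 1*a 2*a 3*(k1*v1+k2*v2+k3*v3)^2"
      unfolding z0_def using z0_identity by simp
    finally show ?thesis using iso kv unfolding \<rho>_def by simp
  qed
  define g where "g = gcd (a 1 * v1) (gcd (a 2 * v2) (a 3 * v3))"
  obtain c1 c' where cc1: "c1 * (a 1 * v1) + c' * gcd (a 2 * v2) (a 3 * v3) = g"
    unfolding g_def using bezout_coefficients_fst_snd by blast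
  obtain c2 c3 where cc2: "c2 * (a 2 * v2) + c3 * (a 3 * v3) = gcd (a 2 * v2) (a 3 * v3)"
    using bezout_coefficients_fst_snd by blast
  define w where "w = (\<lambda>i::nat. if i = 1 then c1 else if i = 2 then c' * c2 else if i = 3 then c' * c3 else 0)"
  have wv: "Bf n a w vv = g"
  proof -
    have "Bf n a w vv = c1 * (a 1 * v1) + c' * (c2 * (a 2 * v2) + c3 * (a 3 * v3))"
      unfolding Bvv w_def by (simp add: algebra_simps)
    then show ?thesis using cc1 cc2 by simp
  qed
  have g0: "g \<noteq> 0" unfolding g_def using vnz a1 a2 a3 by auto
  have groot: "poly P z = 0" if "poly g z = 0" for z
  proof (rule ccontr)
    assume nP: "poly P z \<noteq> 0"
    have "g dvd a 1 * v1" "g dvd a 2 * v2" "g dvd a 3 * v3" unfolding g_def by (auto intro: dvd_trans)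
    moreover have gz: "[:-z,1:] dvd g" using that by (simp add: poly_eq_0_iff_dvd)
    ultimately have "[:-z,1:] dvd a 1 * v1" "[:-z,1:] dvd a 2 * v2" "[:-z,1:] dvd a 3 * v3"
      by (auto intro: dvd_trans)
    then have "poly (a 1 * v1) z = 0" "poly (a 2 * v2) z = 0" "poly (a 3 * v3) z = 0"
      by (simp_all only: poly_eq_0_iff_dvd)
    moreover have "poly (a 1) z \<noteq> 0" "poly (a 2) z \<noteq> 0" "poly (a 3) z \<noteq> 0"
      using nP rootP by auto
    ultimately have "poly v1 z = 0" "poly v2 z = 0" "poly v3 z = 0" by auto
    then have "poly (k1 * v1 + k2 * v2 + k3 * v3) z = 0" by simp
    then show False using kv by simp
  qed
  define w' where "w' = (\<lambda>i. \<rho> * w i + (- Bf n a w z0) * z0 i)"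
  have w'v: "Bf n a w' vv = \<rho> * g" unfolding w'_def Bf_lin2 wv zv by simp
  have w'z: "Bf n a w' z0 = 0" unfolding w'_def Bf_lin2 qz by (simp add: algebra_simps)
  define u where "u = (\<lambda>i. (2 * \<rho> * g) * w' i + (- Bf n a w' w') * vv i)"
  define c where "c = 2 * \<rho>^2 * g^2"
  have c0: "c \<noteq> 0" unfolding c_def using r0 g0 by simp
  have qu: "Bf n a u u = 0" unfolding u_def Bf_q2 w'v qv by (simp add: power2_eq_square algebra_simps)
  have uz: "Bf n a u z0 = 0" unfolding u_def Bf_lin2 w'z vz by simp
  have uv: "Bf n a u vv = c" unfolding u_def Bf_lin2 w'v qv c_def by (simp add: power2_eq_square algebra_simps)
  define S where "S = {z. poly P z = 0}"
  have finS: "finite S" unfolding S_def using P0 poly_roots_finite by blast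
  define N where "N = 3 + 2 * degree c + degree \<rho>"
  have N1: "N \<ge> 1" unfolding N_def by simp
  obtain x0 where x0: "P^N dvd Bf n a x0 x0 - b"
    using loc N1 unfolding has_solution_mod_def sumsq_Bf P_def by blast
  have "\<forall>\<alpha>\<in>S. \<exists>x. [:-\<alpha>,1:]^N dvd Bf n a x x - b \<and> \<not> [:-\<alpha>,1:]^N dvd Bf n a x vv"
  proof
    fix \<alpha> assume "\<alpha> \<in> S"
    then have "[:-\<alpha>,1:] dvd P" unfolding S_def by (simp add: poly_eq_0_iff_dvd)
    then have "[:-\<alpha>,1:]^N dvd P^N" by (rule dvd_power_same)
    then have "[:-\<alpha>,1:]^N dvd Bf n a x0 x0 - b" using x0 by (rule dvd_trans)
    then show "\<exists>x. [:-\<alpha>,1:]^N dvd Bf n a x x - b \<and> \<not> [:-\<alpha>,1:]^N dvd Bf n a x vv"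
      by (intro local_fix[OF qu uz qz zv uv c0 r0]) (auto simp: N_def)
  qed
  then obtain Xl where Xl: "\<And>\<alpha>. \<alpha> \<in> S \<Longrightarrow> [:-\<alpha>,1:]^N dvd Bf n a (Xl \<alpha>) (Xl \<alpha>) - b \<and>
        \<not> [:-\<alpha>,1:]^N dvd Bf n a (Xl \<alpha>) vv"
    by metis
  have "\<forall>i. \<exists>y. \<forall>\<alpha>\<in>S. [:-\<alpha>,1:]^N dvd (y - Xl \<alpha> i)"
  proof
    fix i show "\<exists>y. \<forall>\<alpha>\<in>S. [:-\<alpha>,1:]^N dvd (y - Xl \<alpha> i)"
      using crt_lin[OF finS, of N "\<lambda>\<alpha>. Xl \<alpha> i"] by simp
  qed
  then obtain x1 where x1: "\<And>i \<alpha>. \<alpha> \<in> S \<Longrightarrow> [:-\<alpha>,1:]^N dvd (x1 i - Xl \<alpha> i)"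
    by metis
  define h1 where "h1 = Bf n a x1 vv"
  have loc1: "[:-\<alpha>,1:]^N dvd Bf n a x1 x1 - b" and loc2: "\<not> [:-\<alpha>,1:]^N dvd h1" if "\<alpha> \<in> S" for \<alpha>
  proof -
    have c1: "[:-\<alpha>,1:]^N dvd Bf n a x1 x1 - Bf n a (Xl \<alpha>) (Xl \<alpha>)"
      by (rule Bf_cong_q) (use x1 that in auto)
    have c2: "[:-\<alpha>,1:]^N dvd h1 - Bf n a (Xl \<alpha>) vv"
      unfolding h1_def by (rule Bf_cong_left) (use x1 that in auto)
    have "Bf n a x1 x1 - b = (Bf n a x1 x1 - Bf n a (Xl \<alpha>) (Xl \<alpha>)) + (Bf n a (Xl \<alpha>) (Xl \<alpha>) - b)" by simp
    then show "[:-\<alpha>,1:]^N dvd Bf n a x1 x1 - b" using c1 Xl[OF that] by (metis dvd_add)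
    show "\<not> [:-\<alpha>,1:]^N dvd h1"
    proof
      assume "[:-\<alpha>,1:]^N dvd h1"
      then have "[:-\<alpha>,1:]^N dvd h1 - (h1 - Bf n a (Xl \<alpha>) vv)" using c2 by (rule dvd_diff)
      then show False using Xl[OF that] by simp
    qed
  qed
  define Q where "Q = (\<Prod>\<alpha>\<in>S. [:-\<alpha>,1:]^N)"
  define Q1 where "Q1 = (\<Prod>\<alpha>\<in>S. [:-\<alpha>,1:]^(N-1))"
  define Q2 where "Q2 = (\<Prod>\<alpha>\<in>S. [:-\<alpha>,1::complex:])"
  have QQ: "Q = Q1 * Q2"
  proof -
    have e: "[:-\<alpha>,1::complex:]^N = [:-\<alpha>,1:]^(N-1) * [:-\<alpha>,1:]" for \<alpha>
      using N1 by (metis Suc_diff_le diff_Suc_1 power_Suc2)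
    show ?thesis unfolding Q_def Q1_def Q2_def e by (rule prod.distrib)
  qed
  have Q0: "Q \<noteq> 0" unfolding Q_def using finS by auto
  have Q10: "Q1 \<noteq> 0" unfolding Q1_def using finS by auto
  have polyQ: "poly Q z \<noteq> 0" if "z \<notin> S" for z
    unfolding Q_def poly_prod using finS that by (auto simp: poly_power)
  have Qd: "Q dvd Bf n a x1 x1 - b" unfolding Q_def by (rule prod_lin_dvd[OF finS]) (use loc1 in auto)
  define \<delta> where "\<delta> = gcd h1 (Q * g)"
  have \<delta>0: "\<delta> \<noteq> 0" unfolding \<delta>_def using Q0 g0 by simp
  have \<delta>Q1: "\<delta> dvd Q1"
  proof (rule dvd_by_order[OF \<delta>0])
    fix z
    show "order z \<delta> \<le> order z Q1"
    proof (cases "z \<in> S")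
      case True
      have h10: "h1 \<noteq> 0" using loc2[OF True] by auto
      have "order z \<delta> \<le> order z h1" unfolding \<delta>_def by (rule dvd_imp_order_le[OF h10]) simp
      moreover have "order z h1 < N" using loc2[OF True] h10 order_divides[of z N h1] by auto
      moreover have "[:-z,1:]^(N-1) dvd Q1" unfolding Q1_def using True finS by (intro dvd_prodI)
      then have "N - 1 \<le> order z Q1" using Q10 order_divides by blast
      ultimately show ?thesis by linarith
    next
      case False
      have "poly g z \<noteq> 0" using groot False unfolding S_def by blast
      then have "poly (Q * g) z \<noteq> 0" using polyQ[OF False] by simp
      moreover have "\<delta> dvd Q * g" unfolding \<delta>_def by simp
      ultimately have "poly \<delta> z \<noteq> 0" using poly_dvd_root by blast
      then show ?thesis by (simp add: order_0I)
    qed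
  qed
  define h1' where "h1' = h1 div \<delta>"
  define m' where "m' = (Q * g) div \<delta>"
  have h1e: "h1 = \<delta> * h1'" unfolding h1'_def \<delta>_def by simp
  have m'e: "Q * g = \<delta> * m'" unfolding m'_def \<delta>_def by simp
  have cop1: "coprime h1' m'" unfolding h1'_def m'_def \<delta>_def
    by (rule div_gcd_coprime) (use Q0 g0 in auto)
  have m'0: "m' \<noteq> 0" using m'e Q0 g0 by auto
  obtain r where r: "Q1 = \<delta> * r" using \<delta>Q1 by (elim dvdE)
  have Q2m': "Q2 dvd m'"
  proof -
    have "\<delta> * m' = \<delta> * (r * Q2 * g)" using m'e QQ r by (metis mult.assoc mult.commute)
    then have "m' = r * Q2 * g" using \<delta>0 by simp
    then show ?thesis by simp
  qed
  obtain cc where sqf: "rsquarefree (h1' + smult cc m')"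
    using squarefree_in_progression[OF cop1 m'0] by blast
  define l where "l = h1' + smult cc m'"
  have l0: "l \<noteq> 0" using sqf unfolding l_def rsquarefree_def by blast
  have copl: "coprime l m'" unfolding l_def by (rule coprime_progression[OF cop1])
  have lS: "poly l z \<noteq> 0" if "z \<in> S" for z
  proof
    assume lz: "poly l z = 0"
    have "poly Q2 z = 0" unfolding Q2_def using that finS by (auto simp: poly_prod)
    then have "poly m' z = 0" using Q2m' poly_dvd_root by blast
    then show False using coprime_common_root[OF copl lz] by blast
  qed
  have copl2: "coprime l (Q * \<rho>)"
  proof (rule coprime_no_common_root)
    fix z assume lz: "poly l z = 0"
    then have "z \<notin> S" using lS by blast
    then have "poly P z \<noteq> 0" unfolding S_def by simp
    then have "poly \<rho> z \<noteq> 0" unfolding \<rho>_def using rootP[of 1 z] rootP[of 2 z] rootP[of 3 z] by auto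
    then show "poly (Q * \<rho>) z \<noteq> 0" using polyQ \<open>z \<notin> S\<close> by simp
  qed
  have coplr: "coprime l \<rho>" and coplQ: "coprime l Q" using copl2 by auto
  have \<delta>Q: "\<delta> dvd Q" using \<delta>Q1 QQ by simp
  have cop\<delta>l: "coprime \<delta> l" using coplQ \<delta>Q by (metis coprime_commute coprime_imp_coprime dvd_trans)
  define x2 where "x2 = (\<lambda>i. x1 i + smult cc Q * w i)"
  have Bx2: "Bf n a x2 vv = \<delta> * l"
  proof -
    have "Bf n a x2 vv = h1 + smult cc Q * g" unfolding x2_def Bf_lin1 wv h1_def by simp
    also have "\<dots> = \<delta> * h1' + smult cc (\<delta> * m')" unfolding h1e m'e[symmetric] by simp
    also have "\<dots> = \<delta> * l" unfolding l_def by (simp add: algebra_simps)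
    finally show ?thesis .
  qed
  have Qx2: "Q dvd Bf n a x2 x2 - b"
  proof -
    have "Q dvd Bf n a x2 x2 - Bf n a x1 x1"
      by (rule Bf_cong_q) (simp add: x2_def dvd_smult)
    moreover have "Bf n a x2 x2 - b = (Bf n a x2 x2 - Bf n a x1 x1) + (Bf n a x1 x1 - b)" by simp
    ultimately show ?thesis using Qd by (metis dvd_add)
  qed
  define A where "A = Bf n a x2 x2 - b"
  define C where "C = Bf n a x2 z0"
  define T where "T = C^2 - \<rho> * A"
  obtain S0 where S0: "l dvd S0^2 - T" using sqrt_mod_rsquarefree[OF sqf[folded l_def]] by blast
  obtain e f where ef: "e * (Q * \<rho>) + f * l = 1"
    using bezout_coefficients_fst_snd[of "Q * \<rho>" l] copl2
    by (metis coprime_commute coprime_imp_gcd_eq_1)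
  define \<kappa> where "\<kappa> = e * (S0 - C)"
  define x where "x = (\<lambda>i. x2 i + (Q * \<kappa>) * z0 i)"
  have Bx: "Bf n a x vv = \<delta> * l" unfolding x_def Bf_lin1 zv Bx2 by simp
  have qx: "Bf n a x x = Bf n a x2 x2 + 2 * (Q * \<kappa>) * C + (Q * \<kappa>)^2 * \<rho>"
    unfolding x_def Bf_q1 qz C_def by simp
  have ld: "l dvd Bf n a x x - b"
  proof -
    have "\<rho> * (Bf n a x x - b) = (Q * \<kappa> * \<rho> + C)^2 - T"
      unfolding qx T_def A_def by (simp add: power2_eq_square algebra_simps)
    also have "Q * \<kappa> * \<rho> + C = S0 - f * l * (S0 - C)"
    proof -
      have "e * (Q * \<rho>) = 1 - f * l" using ef by (simp add: algebra_simps)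
      then have "Q * \<kappa> * \<rho> = (1 - f * l) * (S0 - C)" unfolding \<kappa>_def by (metis mult.assoc mult.commute)
      then show ?thesis by (simp add: algebra_simps)
    qed
    also have "(S0 - f * l * (S0 - C))^2 - T = (S0^2 - T) + l * (f * (S0 - C) * (f * l * (S0 - C) - 2 * S0))"
      by (simp add: power2_eq_square algebra_simps)
    finally have "\<rho> * (Bf n a x x - b) = (S0^2 - T) + l * (f * (S0 - C) * (f * l * (S0 - C) - 2 * S0))" .
    then have "l dvd \<rho> * (Bf n a x x - b)" using S0 by simp
    then show ?thesis using coplr by (simp add: coprime_dvd_mult_right_iff)
  qed
  have Qd2: "Q dvd Bf n a x x - b"
  proof -
    have "Bf n a x x - b = (Bf n a x2 x2 - b) + Q * (2 * \<kappa> * C + Q * \<kappa>^2 * \<rho>)"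
      unfolding qx by (simp add: power2_eq_square algebra_simps)
    then show ?thesis using Qx2 by (metis dvd_add dvd_triv_left)
  qed
  have "\<delta> * l dvd Bf n a x x - b"
    by (rule divides_mult[OF dvd_trans[OF \<delta>Q Qd2] ld cop\<delta>l])
  then obtain K where K: "Bf n a x x - b = \<delta> * l * K" by (elim dvdE)
  define y where "y = (\<lambda>i. x i + (- (K * half)) * vv i)"
  have "Bf n a y y = Bf n a x x + 2 * (- (K * half)) * (\<delta> * l)"
    unfolding y_def Bf_q1 Bx qv by simp
  also have "\<dots> = Bf n a x x - (2 * half) * (\<delta> * l * K)" by (simp add: algebra_simps)
  also have "\<dots> = b"
  proof -
    have "Bf n a x x = b + \<delta> * l * K" using K by (simp add: algebra_simps)
    then show ?thesis by (simp add: two_half)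
  qed
  finally have "Bf n a y y = b" .
  then show "has_poly_solution n a b" unfolding has_poly_solution_def sumsq_Bf by blast
qed

end
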